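(* Let $X=[a,b]^n$ with $a<b$, let $Z_d(z,x)\in\mathbb{R}^q$ be the vector of all monomials of degree at most $d$ in $(z,x)\in\mathbb{R}^{2n}$, let $P\in\mathbb{R}^{2q\times 2q}$ be symmetric, and let $k(x,y)=\int_X N(z,x)^TPN(z,y)\,dz$ with $N(z,x)=\begin{bmatrix} Z_d(z,x)I_{S_1}(z,x)\\ Z_d(z,x)I_{S_2}(z,x)\end{bmatrix}$. Then for each $\alpha\in\{0,1\}^n$ there is a polynomial $k_\alpha$ in the $2n$ variables $(x,y)$ such that $k(x,y)=k_\alpha(x,y)$ for all $x,y\in X$ satisfying $(-1)^{\alpha_i}(x_i-y_i)\ge 0$ for all $i=1,\dots,n$.
   Context: For $z,x\in\mathbb{R}^n$ write $z\ge x$ if $z_i\ge x_i$ for all $i$. Let $S_1:=\{(z,x)\in X\times X: z\ge x\}$, $S_2:=(X\times X)\setminus S_1$, and $I_S$ denotes the indicator function of a set $S$. *)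

theory Defs
  imports "HOL-Analysis.Analysis"
begin

definition boxX :: "real \<Rightarrow> real \<Rightarrow> (real^'n) set" where
  "boxX a b = {x. \<forall>i. a \<le> x $ i \<and> x $ i \<le> b}"

definition vge :: "real^'n \<Rightarrow> real^'n \<Rightarrow> bool" where
  "vge z x \<longleftrightarrow> (\<forall>i. z $ i \<ge> x $ i)"

definition S1 :: "real \<Rightarrow> real \<Rightarrow> ((real^'n) \<times> (real^'n)) set" where
  "S1 a b = {(z, x). z \<in> boxX a b \<and> x \<in> boxX a b \<and> vge z x}"

definition S2 :: "real \<Rightarrow> real \<Rightarrow> ((real^'n) \<times> (real^'n)) set" where
  "S2 a b = (boxX a b \<times> boxX a b) - S1 a b"

text \<open>The entries of Z_d are indexed by this (finite) set, so q = card (deg_monos d).\<close>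
definition deg_monos :: "nat \<Rightarrow> (('n::finite \<Rightarrow> nat) \<times> ('n \<Rightarrow> nat)) set" where
  "deg_monos d = {(\<beta>, \<gamma>). sum \<beta> UNIV + sum \<gamma> UNIV \<le> d}"

definition mono_val :: "(('n::finite \<Rightarrow> nat) \<times> ('n \<Rightarrow> nat)) \<Rightarrow> real^'n \<Rightarrow> real^'n \<Rightarrow> real" where
  "mono_val m z x = (\<Prod>i\<in>UNIV. (z $ i) ^ (fst m i)) * (\<Prod>i\<in>UNIV. (x $ i) ^ (snd m i))"

text \<open>Index set of the vector N(z,x) \<in> R^{2q}: (True, m) is the entry of the
  upper block Z_d I_{S_1}, (False, m) the entry of the lower block Z_d I_{S_2}.\<close>
definition Nidx :: "nat \<Rightarrow> (bool \<times> (('n::finite \<Rightarrow> nat) \<times> ('n \<Rightarrow> nat))) set" where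
  "Nidx d = UNIV \<times> deg_monos d"

definition Nvec :: "real \<Rightarrow> real \<Rightarrow> bool \<times> (('n::finite \<Rightarrow> nat) \<times> ('n \<Rightarrow> nat))
    \<Rightarrow> real^'n \<Rightarrow> real^'n \<Rightarrow> real" where
  "Nvec a b u z x = mono_val (snd u) z x *
     (if fst u then indicator (S1 a b) (z, x) else indicator (S2 a b) (z, x))"

text \<open>k(x,y) = \<integral>_X N(z,x)^T P N(z,y) dz, P a 2q x 2q matrix indexed by Nidx d.\<close>
definition kern :: "real \<Rightarrow> real \<Rightarrow> nat
    \<Rightarrow> (bool \<times> (('n::finite \<Rightarrow> nat) \<times> ('n \<Rightarrow> nat)) \<Rightarrow> bool \<times> (('n \<Rightarrow> nat) \<times> ('n \<Rightarrow> nat)) \<Rightarrow> real)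
    \<Rightarrow> real^'n \<Rightarrow> real^'n \<Rightarrow> real" where
  "kern a b d P x y = integral (boxX a b)
     (\<lambda>z. \<Sum>u\<in>Nidx d. \<Sum>v\<in>Nidx d. Nvec a b u z x * P u v * Nvec a b v z y)"

definition poly2 :: "((real^'n::finite) \<Rightarrow> real^'n \<Rightarrow> real) \<Rightarrow> bool" where
  "poly2 f \<longleftrightarrow> (\<exists>E c. finite E \<and>
     (\<forall>x y. f x y = (\<Sum>m\<in>E. c m * mono_val m x y)))"

end

theory Submission
  imports Defs
begin


lemma eucl_prod_integral:
  fixes f :: "'a::euclidean_space \<Rightarrow> real \<Rightarrow> real"
  assumes int: "\<And>b. b \<in> Basis \<Longrightarrow> integrable lborel (f b)"
  shows "integrable lborel (\<lambda>x::'a. \<Prod>b\<in>Basis. f b (x \<bullet> b))"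
    and "(\<integral>x. (\<Prod>b\<in>Basis. f b (x \<bullet> b)) \<partial>(lborel::'a measure)) = (\<Prod>b\<in>Basis. \<integral>t. f b t \<partial>lborel)"
proof -
  interpret product_sigma_finite "\<lambda>_::'a. lborel :: real measure" by standard
  have eq: "(lborel::'a measure) = distr (\<Pi>\<^sub>M b\<in>Basis. lborel) borel (\<lambda>g. \<Sum>b\<in>Basis. g b *\<^sub>R b)"
    by (rule lborel_eq)
  have meas[measurable]: "(\<lambda>g. \<Sum>b\<in>Basis. g b *\<^sub>R b) \<in> measurable (\<Pi>\<^sub>M b\<in>(Basis::'a set). lborel) borel"
    by measurable
  have fm[measurable]: "\<And>b. b \<in> Basis \<Longrightarrow> f b \<in> borel_measurable borel"
  proof -
    fix b :: 'a assume "b \<in> Basis"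
    then have "f b \<in> borel_measurable lborel" using int by (intro borel_measurable_integrable) 
    then show "f b \<in> borel_measurable borel" by simp
  qed
  have inner: "\<And>g b. b \<in> Basis \<Longrightarrow> (\<Sum>b'\<in>Basis. g b' *\<^sub>R b') \<bullet> b = (g b::real)"
    by (simp add: inner_sum_left inner_Basis if_distrib cong: if_cong)
  have cong: "\<And>g. g \<in> space (\<Pi>\<^sub>M b\<in>(Basis::'a set). lborel) \<Longrightarrow>
     (\<Prod>b\<in>Basis. f b ((\<Sum>b'\<in>Basis. g b' *\<^sub>R b') \<bullet> b)) = (\<Prod>b\<in>Basis. f b (g b))"
    by (intro prod.cong refl) (simp add: inner)
  have pi: "integrable (\<Pi>\<^sub>M b\<in>(Basis::'a set). lborel) (\<lambda>g. \<Prod>b\<in>Basis. f b (g b))"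
    by (rule product_integrable_prod) (auto intro: int)
  show "integrable lborel (\<lambda>x::'a. \<Prod>b\<in>Basis. f b (x \<bullet> b))"
    apply (subst eq)
    apply (subst integrable_distr_eq)
      apply (rule meas)
     apply measurable
    apply (subst Bochner_Integration.integrable_cong[OF refl cong])
     apply assumption
    apply (rule pi)
    done
  have "(\<integral>x. (\<Prod>b\<in>Basis. f b (x \<bullet> b)) \<partial>(lborel::'a measure)) =
      (\<integral>g. (\<Prod>b\<in>Basis. f b ((\<Sum>b'\<in>Basis. g b' *\<^sub>R b') \<bullet> b)) \<partial>(\<Pi>\<^sub>M b\<in>(Basis::'a set). lborel))"
    apply (subst eq)
    apply (rule integral_distr)
     apply (rule meas)
    apply measurable
    done
  also have "\<dots> = (\<integral>g. (\<Prod>b\<in>Basis. f b (g b)) \<partial>(\<Pi>\<^sub>M b\<in>(Basis::'a set). lborel))"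
    by (rule Bochner_Integration.integral_cong[OF refl cong])
  also have "\<dots> = (\<Prod>b\<in>Basis. \<integral>t. f b t \<partial>lborel)"
    by (rule product_integral_prod) (auto intro: int)
  finally show "(\<integral>x. (\<Prod>b\<in>Basis. f b (x \<bullet> b)) \<partial>(lborel::'a measure)) = (\<Prod>b\<in>Basis. \<integral>t. f b t \<partial>lborel)" .
qed

lemma vec_prod_integral:
  fixes h :: "'n::finite \<Rightarrow> real \<Rightarrow> real"
  assumes int: "\<And>i. integrable lborel (h i)"
  shows "integrable lborel (\<lambda>x::real^'n. \<Prod>i\<in>UNIV. h i (x$i))"
    and "(\<integral>x. (\<Prod>i\<in>UNIV. h i (x$i)) \<partial>(lborel::(real^'n) measure)) = (\<Prod>i\<in>UNIV. \<integral>t. h i t \<partial>lborel)"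
proof -
  define f where "f b = h (SOME i. b = axis i (1::real))" for b :: "real^'n"
  have B: "(Basis :: (real^'n) set) = range (\<lambda>i. axis i 1)"
    by (auto simp: Basis_vec_def)
  have inj: "inj (\<lambda>i::'n. axis i (1::real))"
    by (auto simp: inj_def axis_eq_axis)
  have fa: "f (axis i 1) = h i" for i
  proof -
    have "(SOME j. axis i (1::real) = axis j 1) = i"
      by (rule some_equality) (auto simp: axis_eq_axis)
    then show ?thesis by (simp add: f_def)
  qed
  have P: "(\<Prod>b\<in>Basis. f b (x \<bullet> b)) = (\<Prod>i\<in>UNIV. h i (x$i))" for x :: "real^'n"
    unfolding B by (subst prod.reindex[OF inj]) (simp add: fa cart_eq_inner_axis)
  have Q: "(\<Prod>b\<in>(Basis::(real^'n) set). \<integral>t. f b t \<partial>lborel) = (\<Prod>i\<in>UNIV. \<integral>t. h i t \<partial>lborel)"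
    unfolding B by (subst prod.reindex[OF inj]) (simp add: fa)
  have intf: "\<And>b. b \<in> (Basis::(real^'n) set) \<Longrightarrow> integrable lborel (f b)"
    unfolding B using int fa by auto
  show "integrable lborel (\<lambda>x::real^'n. \<Prod>i\<in>UNIV. h i (x$i))"
    using eucl_prod_integral(1)[of f, OF intf] unfolding P .
  show "(\<integral>x. (\<Prod>i\<in>UNIV. h i (x$i)) \<partial>(lborel::(real^'n) measure)) = (\<Prod>i\<in>UNIV. \<integral>t. h i t \<partial>lborel)"
    using eucl_prod_integral(2)[of f, OF intf] unfolding P Q .
qed

lemma mono_int_box:
  fixes w c :: "real^'n::finite" and k :: "'n \<Rightarrow> nat"
  assumes wc: "\<forall>i. w$i \<le> c$i"
  shows "((\<lambda>z. indicator (cbox w c) z * (\<Prod>i\<in>UNIV. (z$i)^k i)) has_integral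
           (\<Prod>i\<in>UNIV. (c$i^(k i+1) - w$i^(k i+1))/(k i+1))) UNIV"
proof -
  define h where "h i t = indicator {w$i..c$i} t * t^k i" for i t
  have int: "integrable lborel (h i)" for i
  proof -
    have "continuous_on {w$i..c$i} (\<lambda>t::real. t^k i)" by (intro continuous_intros)
    then show ?thesis
      unfolding h_def using borel_integrable_compact[of "{w$i..c$i}" "\<lambda>t. t^k i"] by simp
  qed
  have eq: "indicator (cbox w c) z * (\<Prod>i\<in>UNIV. (z$i)^k i) = (\<Prod>i\<in>UNIV. h i (z$i))" for z :: "real^'n"
    unfolding h_def prod.distrib
    by (simp add: indicator_def mem_box_cart)
  have h1: "(\<integral>t. h i t \<partial>lborel) = (c$i^(k i+1) - w$i^(k i+1))/(k i+1)" for i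
    unfolding h_def using integral_power[of "w$i" "c$i" "k i"] wc
    by (simp add: mult.commute)
  have "((\<lambda>z. \<Prod>i\<in>UNIV. h i (z$i)) has_integral (\<integral>x. (\<Prod>i\<in>UNIV. h i (x$i)) \<partial>(lborel::(real^'n) measure))) UNIV"
    by (rule has_integral_integral_lborel) (rule vec_prod_integral(1)[OF int])
  then show ?thesis
    unfolding eq vec_prod_integral(2)[OF int] h1 .
qed



lemma poly2_mono: "poly2 (\<lambda>x y. mono_val m x y)"
  unfolding poly2_def by (rule exI[of _ "{m}"], rule exI[of _ "\<lambda>_. 1"]) simp

lemma poly2_scale: "poly2 f \<Longrightarrow> poly2 (\<lambda>x y. c * f x y)"
  unfolding poly2_def
  by (auto simp: sum_distrib_left mult.assoc intro!: exI[of _ "\<lambda>m. c * _ m"])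

lemma poly2_zero: "poly2 (\<lambda>x y. 0)"
  unfolding poly2_def by (rule exI[of _ "{}"]) simp

lemma poly2_add:
  assumes "poly2 f" "poly2 g"
  shows "poly2 (\<lambda>x y. f x y + g x y)"
proof -
  obtain E1 c1 where 1: "finite E1" "\<forall>x y. f x y = (\<Sum>m\<in>E1. c1 m * mono_val m x y)"
    using assms(1) unfolding poly2_def by blast
  obtain E2 c2 where 2: "finite E2" "\<forall>x y. g x y = (\<Sum>m\<in>E2. c2 m * mono_val m x y)"
    using assms(2) unfolding poly2_def by blast
  define c where "c m = (if m \<in> E1 then c1 m else 0) + (if m \<in> E2 then c2 m else 0)" for m
  have "f x y + g x y = (\<Sum>m\<in>E1 \<union> E2. c m * mono_val m x y)" for x y
  proof -
    have a: "(\<Sum>m\<in>E1 \<union> E2. (if m \<in> E1 then c1 m * mono_val m x y else 0)) = (\<Sum>m\<in>E1. c1 m * mono_val m x y)"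
      using 1(1) 2(1) by (simp add: sum.inter_restrict[symmetric] Int_absorb1)
    have b: "(\<Sum>m\<in>E1 \<union> E2. (if m \<in> E2 then c2 m * mono_val m x y else 0)) = (\<Sum>m\<in>E2. c2 m * mono_val m x y)"
      using 1(1) 2(1) by (simp add: sum.inter_restrict[symmetric] Int_absorb1)
    have "(\<Sum>m\<in>E1 \<union> E2. c m * mono_val m x y) =
        (\<Sum>m\<in>E1 \<union> E2. (if m \<in> E1 then c1 m * mono_val m x y else 0)) +
        (\<Sum>m\<in>E1 \<union> E2. (if m \<in> E2 then c2 m * mono_val m x y else 0))"
      unfolding sum.distrib[symmetric] by (intro sum.cong) (auto simp: c_def algebra_simps)
    then show ?thesis using a b 1(2) 2(2) by simp
  qed
  then show ?thesis unfolding poly2_def using 1(1) 2(1) by blast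
qed

lemma poly2_sum: "(\<And>i. i \<in> I \<Longrightarrow> poly2 (f i)) \<Longrightarrow> poly2 (\<lambda>x y. \<Sum>i\<in>I. f i x y)"
proof (induction I rule: infinite_finite_induct)
  case (infinite A) then show ?case by (simp add: poly2_zero)
next
  case empty then show ?case by (simp add: poly2_zero)
next
  case (insert i I) then show ?case by (simp add: poly2_add)
qed

definition madd :: "(('n::finite \<Rightarrow> nat) \<times> ('n \<Rightarrow> nat)) \<Rightarrow> (('n \<Rightarrow> nat) \<times> ('n \<Rightarrow> nat)) \<Rightarrow> (('n \<Rightarrow> nat) \<times> ('n \<Rightarrow> nat))" where
  "madd m1 m2 = ((\<lambda>i. fst m1 i + fst m2 i), (\<lambda>i. snd m1 i + snd m2 i))"

lemma mono_madd: "mono_val (madd m1 m2) x y = mono_val m1 x y * mono_val m2 x y"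
  unfolding mono_val_def madd_def by (simp add: power_add prod.distrib algebra_simps)

lemma poly2_mult:
  assumes "poly2 f" "poly2 g"
  shows "poly2 (\<lambda>x y. f x y * g x y)"
proof -
  obtain E1 c1 where 1: "finite E1" "\<forall>x y. f x y = (\<Sum>m\<in>E1. c1 m * mono_val m x y)"
    using assms(1) unfolding poly2_def by blast
  obtain E2 c2 where 2: "finite E2" "\<forall>x y. g x y = (\<Sum>m\<in>E2. c2 m * mono_val m x y)"
    using assms(2) unfolding poly2_def by blast
  have eq: "f x y * g x y = (\<Sum>m1\<in>E1. \<Sum>m2\<in>E2. (c1 m1 * c2 m2) * mono_val (madd m1 m2) x y)" for x y
    using 1(2) 2(2) by (simp add: mono_madd sum_product mult_ac)
  have "poly2 (\<lambda>x y. \<Sum>m1\<in>E1. \<Sum>m2\<in>E2. (c1 m1 * c2 m2) * mono_val (madd m1 m2) x y)"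
    by (intro poly2_sum poly2_scale poly2_mono)
  then show ?thesis unfolding eq .
qed

lemma poly2_const: "poly2 (\<lambda>(x::real^'n::finite) y. c)"
proof -
  have one: "mono_val ((\<lambda>_. 0), (\<lambda>_. 0)) x y = 1" for x y :: "real^'n::finite"
    by (simp add: mono_val_def)
  have "poly2 (\<lambda>x y::real^'n. c * mono_val ((\<lambda>_. 0), (\<lambda>_. 0)) x y)"
    by (intro poly2_scale poly2_mono)
  then show ?thesis by (simp add: one)
qed

lemma poly2_diff: "poly2 f \<Longrightarrow> poly2 g \<Longrightarrow> poly2 (\<lambda>x y. f x y - g x y)"
  using poly2_add[of f "\<lambda>x y. (-1) * g x y"] poly2_scale[of g "-1"] by simp

lemma poly2_prod: "(\<And>i. i \<in> I \<Longrightarrow> poly2 (f i)) \<Longrightarrow> poly2 (\<lambda>x y. \<Prod>i\<in>I. f i x y)"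
proof (induction I rule: infinite_finite_induct)
  case (infinite A) then show ?case by (simp add: poly2_const)
next
  case empty then show ?case by (simp add: poly2_const)
next
  case (insert i I) then show ?case by (simp add: poly2_mult)
qed

lemma poly2_pow: "poly2 f \<Longrightarrow> poly2 (\<lambda>x y. f x y ^ k)"
  by (induction k) (simp_all add: poly2_const poly2_mult)

lemma poly2_x: fixes i :: "'n::finite" shows "poly2 (\<lambda>x y. x $ i)"
proof -
  have "mono_val ((\<lambda>j. if j = i then 1 else 0), (\<lambda>_. 0)) x y = x $ i" for x y :: "real^'n::finite"
    by (simp add: mono_val_def if_distrib cong: if_cong)
  then show ?thesis using poly2_mono[of "((\<lambda>j. if j = i then 1 else 0), (\<lambda>_. 0))"] by simp
qed

lemma poly2_y: fixes i :: "'n::finite" shows "poly2 (\<lambda>x y. y $ i)"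
proof -
  have "mono_val ((\<lambda>_. 0), (\<lambda>j. if j = i then 1 else 0)) x y = y $ i" for x y :: "real^'n::finite"
    by (simp add: mono_val_def if_distrib cong: if_cong)
  then show ?thesis using poly2_mono[of "((\<lambda>_. 0), (\<lambda>j. if j = i then 1 else 0))"] by simp
qed



definition cvec :: "real \<Rightarrow> real^'n::finite" where "cvec t = (\<chi> i. t)"
definition Zk :: "('n::finite \<Rightarrow> nat) \<Rightarrow> real^'n \<Rightarrow> real" where "Zk k z = (\<Prod>i\<in>UNIV. (z$i)^k i)"
definition Fk :: "real \<Rightarrow> ('n::finite \<Rightarrow> nat) \<Rightarrow> real^'n \<Rightarrow> real" where
  "Fk c k w = (\<Prod>i\<in>UNIV. (c^(k i+1) - w$i^(k i+1))/(k i+1))"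
definition ie :: "real \<Rightarrow> bool \<Rightarrow> real^'n::finite \<Rightarrow> real^'n \<Rightarrow> real" where
  "ie c s x z = (if s then indicator (cbox x (cvec c)) z else 1 - indicator (cbox x (cvec c)) z)"
definition Jh :: "real \<Rightarrow> real \<Rightarrow> ('n::finite \<Rightarrow> nat) \<Rightarrow> bool \<Rightarrow> bool \<Rightarrow> real^'n \<Rightarrow> real^'n \<Rightarrow> real^'n \<Rightarrow> real" where
  "Jh a b k s t x y m = (if s then (if t then Fk b k m else Fk b k x - Fk b k m)
     else (if t then Fk b k y - Fk b k m else Fk b k (cvec a) - Fk b k x - Fk b k y + Fk b k m))"

lemma G:
  fixes w :: "real^'n::finite"
  assumes "\<forall>i. a \<le> w$i \<and> w$i \<le> b"
  shows "((\<lambda>z. indicator (cbox w (cvec b)) z * Zk k z) has_integral Fk b k w) (cbox (cvec a) (cvec b))"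
proof -
  have h1: "((\<lambda>z. indicator (cbox w (cvec b)) z * Zk k z) has_integral Fk b k w) UNIV"
    using mono_int_box[of w "cvec b" k] assms unfolding Zk_def Fk_def by (simp add: cvec_def)
  have eq: "(\<lambda>z. if z \<in> cbox (cvec a) (cvec b) then indicator (cbox w (cvec b)) z * Zk k z else 0)
      = (\<lambda>z. indicator (cbox w (cvec b)) z * Zk k z)"
  proof -
    have sub: "cbox w (cvec b) \<subseteq> cbox (cvec a) (cvec b)"
    proof
      fix z assume "z \<in> cbox w (cvec b)"
      then have "\<forall>i. w$i \<le> z$i \<and> z$i \<le> b" by (simp add: mem_box_cart cvec_def)
      then have "\<forall>i. a \<le> z$i \<and> z$i \<le> b" using assms by (metis order_trans)
      then show "z \<in> cbox (cvec a) (cvec b)" by (simp add: mem_box_cart cvec_def)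
    qed
    show ?thesis using sub by (auto simp: fun_eq_iff indicator_def)
  qed
  have "((\<lambda>z. if z \<in> cbox (cvec a) (cvec b) then indicator (cbox w (cvec b)) z * Zk k z else 0) has_integral Fk b k w) UNIV"
    unfolding eq by (rule h1)
  then show ?thesis
    by (simp only: has_integral_restrict_UNIV)
qed

lemma J:
  fixes x y m :: "real^'n::finite"
  assumes x: "\<forall>i. a \<le> x$i \<and> x$i \<le> b" and y: "\<forall>i. a \<le> y$i \<and> y$i \<le> b"
    and m: "\<forall>i. a \<le> m$i \<and> m$i \<le> b" and ab: "a \<le> b"
    and hm: "\<And>z. (indicator (cbox m (cvec b)) z :: real) = indicator (cbox x (cvec b)) z * indicator (cbox y (cvec b)) z"
  shows "((\<lambda>z. Zk k z * (ie b s x z * ie b t y z)) has_integral Jh a b k s t x y m) (cbox (cvec a) (cvec b))"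
proof -
  note Gx = G[OF x, of k] and Gy = G[OF y, of k] and Gm = G[OF m, of k]
  have "\<forall>i. a \<le> (cvec a :: real^'n)$i \<and> (cvec a :: real^'n)$i \<le> b" using ab by (simp add: cvec_def)
  note GA = G[OF this, of k]
  have one: "z \<in> cbox (cvec a) (cvec b) \<Longrightarrow> indicator (cbox (cvec a) (cvec b)) z = (1::real)" for z :: "real^'n"
    by simp
  show ?thesis
  proof (cases s; cases t)
    assume "s" "t"
    then show ?thesis apply (simp add: Jh_def)
      apply (rule has_integral_eq[OF _ Gm])
      apply (simp add: ie_def hm) done
  next
    assume "s" "\<not> t"
    then show ?thesis apply (simp add: Jh_def)
      apply (rule has_integral_eq[OF _ has_integral_diff[OF Gx Gm]])
      apply (simp add: ie_def hm algebra_simps) done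
  next
    assume "\<not> s" "t"
    then show ?thesis apply (simp add: Jh_def)
      apply (rule has_integral_eq[OF _ has_integral_diff[OF Gy Gm]])
      apply (simp add: ie_def hm algebra_simps) done
  next
    assume "\<not> s" "\<not> t"
    then show ?thesis apply (simp add: Jh_def)
      apply (rule has_integral_eq[OF _ has_integral_add[OF has_integral_diff[OF has_integral_diff[OF GA Gx] Gy] Gm]])
      apply (simp add: ie_def hm algebra_simps one) done
  qed
qed



definition Xm :: "('n::finite \<Rightarrow> nat) \<Rightarrow> real^'n \<Rightarrow> real" where "Xm g x = (\<Prod>i\<in>UNIV. (x$i)^g i)"

lemma boxX_cbox: "boxX a b = cbox (cvec a) (cvec b)"
  by (auto simp: boxX_def mem_box_cart cvec_def)

lemma ind_S1: "z \<in> boxX a b \<Longrightarrow> x \<in> boxX a b \<Longrightarrow> indicator (S1 a b) (z,x) = (indicator (cbox x (cvec b)) z :: real)"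
  by (auto simp: S1_def vge_def indicator_def mem_box_cart cvec_def boxX_def)

lemma ind_S2: "z \<in> boxX a b \<Longrightarrow> x \<in> boxX a b \<Longrightarrow> indicator (S2 a b) (z,x) = 1 - (indicator (cbox x (cvec b)) z :: real)"
  by (auto simp: S2_def S1_def vge_def indicator_def mem_box_cart cvec_def boxX_def)

lemma Nvec_eq: "z \<in> boxX a b \<Longrightarrow> x \<in> boxX a b \<Longrightarrow>
   Nvec a b u z x = Zk (fst (snd u)) z * Xm (snd (snd u)) x * ie b (fst u) x z"
  by (simp add: Nvec_def ind_S1 ind_S2 mono_val_def Zk_def Xm_def ie_def)

lemma Zk_add: "Zk k1 z * Zk k2 z = Zk (\<lambda>i. k1 i + k2 i) z"
  by (simp add: Zk_def power_add prod.distrib)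

lemma poly2_Xm_x: "poly2 (\<lambda>x (y::real^'n::finite). Xm g x)"
  unfolding Xm_def by (intro poly2_prod poly2_pow poly2_x)

lemma poly2_Xm_y: "poly2 (\<lambda>(x::real^'n::finite) y. Xm g y)"
  unfolding Xm_def by (intro poly2_prod poly2_pow poly2_y)

lemma poly2_div: "poly2 f \<Longrightarrow> poly2 (\<lambda>x y. f x y / c)"
  using poly2_scale[of f "1/c"] by simp

lemma poly2_Fk: "(\<And>i. poly2 (\<lambda>x y. w x y $ i)) \<Longrightarrow> poly2 (\<lambda>x y. Fk c k (w x y))"
  unfolding Fk_def by (intro poly2_prod poly2_div poly2_diff poly2_const poly2_pow) auto

lemma poly2_Jh:
  assumes "\<And>i. poly2 (\<lambda>x y. m x y $ i)"
  shows "poly2 (\<lambda>x y. Jh a b k s t x y (m x y))"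
proof -
  have px: "poly2 (\<lambda>x y. Fk b k x)" by (rule poly2_Fk[of "\<lambda>x y. x"]) (rule poly2_x)
  have py: "poly2 (\<lambda>x y. Fk b k y)" by (rule poly2_Fk[of "\<lambda>x y. y"]) (rule poly2_y)
  have pm: "poly2 (\<lambda>x y. Fk b k (m x y))" by (rule poly2_Fk) (rule assms)
  have pa: "poly2 (\<lambda>(x::real^'n) y. Fk b k (cvec a))" by (rule poly2_const)
  show ?thesis unfolding Jh_def
    by (cases s; cases t) (simp_all add: px py pm pa poly2_diff poly2_add)
qed



theorem mainTheorem5:
  fixes a b :: real and d :: nat
    and P :: "bool \<times> (('n::finite \<Rightarrow> nat) \<times> ('n \<Rightarrow> nat)) \<Rightarrow> bool \<times> (('n \<Rightarrow> nat) \<times> ('n \<Rightarrow> nat)) \<Rightarrow> real"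
    and \<alpha> :: "'n \<Rightarrow> nat"
  assumes "a < b"
    and "\<forall>u\<in>Nidx d. \<forall>v\<in>Nidx d. P u v = P v u"
    and "\<forall>i. \<alpha> i \<in> {0, 1}"
  shows "\<exists>k\<alpha>. poly2 k\<alpha> \<and>
    (\<forall>x\<in>boxX a b. \<forall>y\<in>boxX a b.
       (\<forall>i. (-1) ^ (\<alpha> i) * (x $ i - y $ i) \<ge> (0::real)) \<longrightarrow>
       kern a b d P x y = k\<alpha> x y)"
proof -
  define mm where "mm x y = (\<chi> i. if \<alpha> i = 0 then x$i else y$i)" for x y :: "real^'n"
  define ka where "ka x y = (\<Sum>u\<in>Nidx d. \<Sum>v\<in>Nidx d. P u v * (Xm (snd (snd u)) x * Xm (snd (snd v)) y) *
      Jh a b (\<lambda>i. fst (snd u) i + fst (snd v) i) (fst u) (fst v) x y (mm x y))" for x y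
  have pm: "poly2 (\<lambda>x y. mm x y $ i)" for i
    by (cases "\<alpha> i = 0") (simp_all add: mm_def poly2_x poly2_y)
  have poly: "poly2 ka"
  proof -
    have "poly2 (\<lambda>x y. ka x y)" unfolding ka_def
      by (intro poly2_sum poly2_scale poly2_mult poly2_Xm_x poly2_Xm_y poly2_Jh pm)
    then show ?thesis by simp
  qed
  have main: "kern a b d P x y = ka x y"
    if x: "x \<in> boxX a b" and y: "y \<in> boxX a b" and reg: "\<forall>i. (-1) ^ (\<alpha> i) * (x $ i - y $ i) \<ge> (0::real)"
    for x y
  proof (cases "finite (Nidx d :: (bool \<times> (('n \<Rightarrow> nat) \<times> ('n \<Rightarrow> nat))) set)")
    case False
    then show ?thesis unfolding kern_def ka_def sum.infinite[OF False] by simp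
  next
    case fin: True
    have xi: "\<forall>i. a \<le> x$i \<and> x$i \<le> b" using x by (simp add: boxX_def)
    have yi: "\<forall>i. a \<le> y$i \<and> y$i \<le> b" using y by (simp add: boxX_def)
    have mx: "(if \<alpha> i = 0 then x$i else y$i) = max (x$i) (y$i)" for i
    proof (cases "\<alpha> i = 0")
      case True then show ?thesis using reg[rule_format, of i] by simp
    next
      case False then have "\<alpha> i = 1" using assms(3) by (metis insertE singletonD)
      then show ?thesis using reg[rule_format, of i] by simp
    qed
    have mi: "\<forall>i. a \<le> mm x y$i \<and> mm x y$i \<le> b" using xi yi by (simp add: mm_def mx le_max_iff_disj)
    have hm: "(indicator (cbox (mm x y) (cvec b)) z :: real) =
        indicator (cbox x (cvec b)) z * indicator (cbox y (cvec b)) z" for z :: "real^'n"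
      by (auto simp: indicator_def mem_box_cart mm_def mx cvec_def)
    have ab: "a \<le> b" using assms(1) by simp
    have hi: "((\<lambda>z. \<Sum>u\<in>Nidx d. \<Sum>v\<in>Nidx d. P u v * (Xm (snd (snd u)) x * Xm (snd (snd v)) y) *
         (Zk (\<lambda>i. fst (snd u) i + fst (snd v) i) z * (ie b (fst u) x z * ie b (fst v) y z)))
        has_integral ka x y) (cbox (cvec a) (cvec b))"
      unfolding ka_def
      by (intro has_integral_sum fin has_integral_mult_right J[OF xi yi mi ab hm])
    have "((\<lambda>z. \<Sum>u\<in>Nidx d. \<Sum>v\<in>Nidx d. Nvec a b u z x * P u v * Nvec a b v z y)
        has_integral ka x y) (boxX a b)"
      unfolding boxX_cbox
    proof (rule has_integral_eq[OF _ hi])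
      fix z :: "real^'n" assume z: "z \<in> cbox (cvec a) (cvec b)"
      then have zb: "z \<in> boxX a b" by (simp add: boxX_cbox)
      show "(\<Sum>u\<in>Nidx d. \<Sum>v\<in>Nidx d. P u v * (Xm (snd (snd u)) x * Xm (snd (snd v)) y) *
         (Zk (\<lambda>i. fst (snd u) i + fst (snd v) i) z * (ie b (fst u) x z * ie b (fst v) y z))) =
         (\<Sum>u\<in>Nidx d. \<Sum>v\<in>Nidx d. Nvec a b u z x * P u v * Nvec a b v z y)"
        by (intro sum.cong refl) (simp add: Nvec_eq[OF zb x] Nvec_eq[OF zb y] Zk_add[symmetric] mult_ac)
    qed
    then show ?thesis unfolding kern_def by (rule integral_unique)
  qed
  show ?thesis using poly main by blast
qed


end
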